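(* Under the hierarchical comparison model described in the context, with $0<q_0(\mathbf K)<1$ and $Q(\mathbf Y\mid\mathbf K)>Q(\mathbf Y,E_0\mid\mathbf K)$, the Bayes factor of $E_0$ against $E_1$ satisfies $$ \frac{P(\mathbf Y\mid E_0,\mathbf K)}{P(\mathbf Y\mid E_1,\mathbf K)} = \frac{1-q_0(\mathbf K)}{q_0(\mathbf K)}\;\frac{Q(\mathbf Y,E_0\mid\mathbf K)}{Q(\mathbf Y\mid\mathbf K)-Q(\mathbf Y,E_0\mid\mathbf K)}, $$ with $Q(\mathbf Y\mid\mathbf K)=\prod_{\ell=1}^I[A_\ell^{K^\ell}]_{1,n+1}$, $Q(\mathbf Y,E_0\mid\mathbf K)=\sum_{t=2}^{n}\prod_{\ell=1}^I[A_\ell^{k_\ell}]_{1,t}[A_\ell^{K^\ell-k_\ell}]_{t,n+1}$, and $q_0(\mathbf K)=\sum_{t=2}^{n}\prod_{\ell=1}^I\binom{t-2}{k_\ell-1}\binom{n-t}{K^\ell-k_\ell-1}\big/\binom{n-1}{K^\ell-1}$. In particular the ratio does not depend on the prior probability $p_0(\mathbf K)\in(0,1)$.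
   Context: For integers $i<j$ write $[\![i,j[\![=\{i,\dots,j-1\}$. A partition of $[\![1,n+1[\![$ into $K$ non-empty segments is $m=(\tau_0,\dots,\tau_K)$ with $1=\tau_0<\tau_1<\dots<\tau_K=n+1$; its segments are $[\![\tau_{k-1},\tau_k[\![$ and $\tau_k$ is its $k$-th change-point. $\mathcal M_K^{1,n+1}$ is the set of such partitions. We have $I$ series $\mathbf Y=(Y^1,\dots,Y^I)$, each of length $n$, with partitions $\mathbf m=(m^1,\dots,m^I)$, $m^\ell\in\mathcal M_{K^\ell}^{1,n+1}$, and $\tau^\ell_k$ the $k$-th change-point of $m^\ell$; fix indices $1\le k_\ell\le K^\ell-1$. Let $\mathcal M_{\mathbf K}^{1,n+1}=\prod_\ell\mathcal M_{K^\ell}^{1,n+1}$. Define the event $E_0=\{\tau^1_{k_1}=\dots=\tau^I_{k_I}\}$, $E_1$ its complement, and $E=\mathbb 1\{E_1\}$. Hierarchical model: $E\sim$ Bernoulli$(1-p_0(\mathbf K))$ with $p_0(\mathbf K)=P(E_0\mid\mathbf K)\in(0,1)$ a given prior probability; given $E$, $\mathbf m$ is uniform on $\mathcal M_{\mathbf K}^{1,n+1}\cap E_0$ if $E=0$ and uniform on $\mathcal M_{\mathbf K}^{1,n+1}\cap E_1$ if $E=1$; independently, for each series $\ell$ and each segment $J$ of $m^\ell$, a parameter $\theta^\ell_J$ is drawn independently from a prior $P(\theta)$; given $\mathbf m$ and the parameters, all $Y^\ell_t$ are independent with $Y^\ell_t\sim\mathcal G(\theta^\ell_J,\phi^\ell)$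 for $t\in J\in m^\ell$, $\phi^\ell$ known. For series $\ell$, $A_\ell$ is the $(n+1)\times(n+1)$ matrix with $[A_\ell]_{i,j}=\int\prod_{t\in[\![i,j[\![}P(Y^\ell_t\mid\theta)\,P(\theta)\,d\theta$ for $1\le i<j\le n+1$ and $0$ otherwise; $A_\ell^j$ denotes its $j$-th matrix power. Binomial coefficients $\binom{a}{b}$ are $0$ when $b<0$ or $b>a$. *)

theory Defs
  imports "HOL-Probability.Probability"
begin

text \<open>Segment marginal likelihood matrix A_l (entries indexed 1..n+1).
  M is the prior distribution of theta, f t theta = P(Y^l_t | theta) for the fixed data.\<close>
definition Amat :: "nat \<Rightarrow> 'a measure \<Rightarrow> (nat \<Rightarrow> 'a \<Rightarrow> real) \<Rightarrow> nat \<Rightarrow> nat \<Rightarrow> real" where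
  "Amat n M f i j =
     (if 1 \<le> i \<and> i < j \<and> j \<le> n + 1 then (\<integral>\<theta>. (\<Prod>t\<in>{i..<j}. f t \<theta>) \<partial>M) else 0)"

fun mpow :: "nat \<Rightarrow> (nat \<Rightarrow> nat \<Rightarrow> real) \<Rightarrow> nat \<Rightarrow> nat \<Rightarrow> nat \<Rightarrow> real" where
  "mpow N A 0 i j = (if i = j then 1 else 0)"
| "mpow N A (Suc p) i j = (\<Sum>h\<in>{1..N}. mpow N A p i h * A h j)"

definition partitions :: "nat \<Rightarrow> nat \<Rightarrow> (nat \<Rightarrow> nat) set" where
  "partitions n K = {\<tau>. \<tau> 0 = 1 \<and> \<tau> K = n + 1 \<and> (\<forall>k<K. \<tau> k < \<tau> (Suc k)) \<and> (\<forall>k>K. \<tau> k = 0)}"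

definition multipart :: "nat \<Rightarrow> nat \<Rightarrow> (nat \<Rightarrow> nat) \<Rightarrow> (nat \<Rightarrow> nat \<Rightarrow> nat) set" where
  "multipart I n K = PiE {1..I} (\<lambda>l. partitions n (K l))"

definition E0set :: "nat \<Rightarrow> (nat \<Rightarrow> nat) \<Rightarrow> (nat \<Rightarrow> nat \<Rightarrow> nat) set" where
  "E0set I k = {m. \<forall>l\<in>{1..I}. \<forall>l'\<in>{1..I}. m l (k l) = m l' (k l')}"

definition lik_m :: "nat \<Rightarrow> 'a measure \<Rightarrow> (nat \<Rightarrow> nat \<Rightarrow> 'a \<Rightarrow> real) \<Rightarrow> nat \<Rightarrow> (nat \<Rightarrow> nat)
     \<Rightarrow> (nat \<Rightarrow> nat \<Rightarrow> nat) \<Rightarrow> real" where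
  "lik_m n M f I K m = (\<Prod>l\<in>{1..I}. \<Prod>j\<in>{1..K l}. Amat n M (f l) (m l (j - 1)) (m l j))"

definition prior_m :: "real \<Rightarrow> nat \<Rightarrow> nat \<Rightarrow> (nat \<Rightarrow> nat) \<Rightarrow> (nat \<Rightarrow> nat) \<Rightarrow> (nat \<Rightarrow> nat \<Rightarrow> nat) \<Rightarrow> real" where
  "prior_m p0 I n K k m =
     (if m \<in> multipart I n K \<inter> E0set I k then p0 / card (multipart I n K \<inter> E0set I k)
      else if m \<in> multipart I n K - E0set I k then (1 - p0) / card (multipart I n K - E0set I k)
      else 0)"

definition PY_E0 :: "real \<Rightarrow> nat \<Rightarrow> nat \<Rightarrow> (nat \<Rightarrow> nat) \<Rightarrow> (nat \<Rightarrow> nat) \<Rightarrow> 'a measure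
     \<Rightarrow> (nat \<Rightarrow> nat \<Rightarrow> 'a \<Rightarrow> real) \<Rightarrow> real" where
  "PY_E0 p0 I n K k M f =
     (let S = multipart I n K \<inter> E0set I k in
      (\<Sum>m\<in>S. prior_m p0 I n K k m * lik_m n M f I K m) / (\<Sum>m\<in>S. prior_m p0 I n K k m))"

definition PY_E1 :: "real \<Rightarrow> nat \<Rightarrow> nat \<Rightarrow> (nat \<Rightarrow> nat) \<Rightarrow> (nat \<Rightarrow> nat) \<Rightarrow> 'a measure
     \<Rightarrow> (nat \<Rightarrow> nat \<Rightarrow> 'a \<Rightarrow> real) \<Rightarrow> real" where
  "PY_E1 p0 I n K k M f =
     (let S = multipart I n K - E0set I k in
      (\<Sum>m\<in>S. prior_m p0 I n K k m * lik_m n M f I K m) / (\<Sum>m\<in>S. prior_m p0 I n K k m))"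

definition QY :: "nat \<Rightarrow> nat \<Rightarrow> (nat \<Rightarrow> nat) \<Rightarrow> 'a measure \<Rightarrow> (nat \<Rightarrow> nat \<Rightarrow> 'a \<Rightarrow> real) \<Rightarrow> real" where
  "QY I n K M f = (\<Prod>l\<in>{1..I}. mpow (n + 1) (Amat n M (f l)) (K l) 1 (n + 1))"

definition QYE0 :: "nat \<Rightarrow> nat \<Rightarrow> (nat \<Rightarrow> nat) \<Rightarrow> (nat \<Rightarrow> nat) \<Rightarrow> 'a measure
     \<Rightarrow> (nat \<Rightarrow> nat \<Rightarrow> 'a \<Rightarrow> real) \<Rightarrow> real" where
  "QYE0 I n K k M f = (\<Sum>t\<in>{2..n}. \<Prod>l\<in>{1..I}.
      mpow (n + 1) (Amat n M (f l)) (k l) 1 t * mpow (n + 1) (Amat n M (f l)) (K l - k l) t (n + 1))"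

definition q0 :: "nat \<Rightarrow> nat \<Rightarrow> (nat \<Rightarrow> nat) \<Rightarrow> (nat \<Rightarrow> nat) \<Rightarrow> real" where
  "q0 I n K k = (\<Sum>t\<in>{2..n}. \<Prod>l\<in>{1..I}.
      real ((t - 2) choose (k l - 1)) * real ((n - t) choose (K l - k l - 1))
      / real ((n - 1) choose (K l - 1)))"

end

theory Submission
  imports Defs
begin

definition P :: "nat \<Rightarrow> nat \<Rightarrow> nat \<Rightarrow> (nat \<Rightarrow> nat) set" where
  "P a b K = {\<tau>. \<tau> 0 = a \<and> \<tau> K = b \<and> (\<forall>k<K. \<tau> k < \<tau> (Suc k)) \<and> (\<forall>k>K. \<tau> k = 0)}"

lemma partitions_P: "partitions n K = P 1 (n+1) K"
  unfolding partitions_def P_def by simp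

lemma strict_mono_path:
  fixes \<tau> :: "nat \<Rightarrow> nat"
  assumes "\<forall>k<K. \<tau> k < \<tau> (Suc k)" "x < y" "y \<le> K"
  shows "\<tau> x < \<tau> y"
  using assms(2,3)
proof (induction y)
  case 0 then show ?case by simp
next
  case (Suc y)
  have st: "\<tau> y < \<tau> (Suc y)" using assms(1) Suc.prems(2) by simp
  show ?case
  proof (cases "x = y")
    case True
    with st show ?thesis by simp
  next
    case False
    then have "\<tau> x < \<tau> y" using Suc by simp
    with st show ?thesis by simp
  qed
qed

lemma mono_path:
  fixes \<tau> :: "nat \<Rightarrow> nat"
  assumes "\<forall>k<K. \<tau> k < \<tau> (Suc k)" "x \<le> y" "y \<le> K"
  shows "\<tau> x \<le> \<tau> y"
  using strict_mono_path[OF assms(1), of x y] assms(2,3)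
  by (cases "x = y") (auto intro: less_imp_le)

lemma finite_P: "finite (P a b K)"
proof -
  have "P a b K \<subseteq> {f. \<forall>x. (x \<in> {..K} \<longrightarrow> f x \<in> {..b}) \<and> (x \<notin> {..K} \<longrightarrow> f x = 0)}"
  proof
    fix \<tau> assume "\<tau> \<in> P a b K"
    then have h: "\<tau> 0 = a" "\<tau> K = b" "\<forall>k<K. \<tau> k < \<tau> (Suc k)" "\<forall>k>K. \<tau> k = 0"
      by (auto simp: P_def)
    show "\<tau> \<in> {f. \<forall>x. (x \<in> {..K} \<longrightarrow> f x \<in> {..b}) \<and> (x \<notin> {..K} \<longrightarrow> f x = 0)}"
    proof (intro CollectI allI conjI impI)
      fix x assume "x \<in> {..K}"
      then have "\<tau> x \<le> \<tau> K" using mono_path[OF h(3), of x K] by simp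
      then show "\<tau> x \<in> {..b}" using h(2) by simp
    next
      fix x assume "x \<notin> {..K}"
      then show "\<tau> x = 0" using h(4) by simp
    qed
  qed
  moreover have "finite {f. \<forall>x. (x \<in> {..K} \<longrightarrow> f x \<in> {..b}) \<and> (x \<notin> {..K} \<longrightarrow> f x = (0::nat))}"
    by (rule finite_set_of_finite_funs) auto
  ultimately show ?thesis by (rule finite_subset)
qed

definition pw :: "(nat \<Rightarrow> nat \<Rightarrow> real) \<Rightarrow> nat \<Rightarrow> (nat \<Rightarrow> nat) \<Rightarrow> real" where
  "pw B K \<tau> = (\<Prod>j\<in>{1..K}. B (\<tau> (j - 1)) (\<tau> j))"

lemma pw_Suc: "\<tau> (Suc K) = b \<Longrightarrow> pw B (Suc K) \<tau> = pw B K (\<tau>(Suc K := 0)) * B (\<tau> K) b"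
proof -
  assume b: "\<tau> (Suc K) = b"
  have "pw B K (\<tau>(Suc K := 0)) = pw B K \<tau>"
    unfolding pw_def by (rule prod.cong) auto
  moreover have "pw B (Suc K) \<tau> = pw B K \<tau> * B (\<tau> K) b"
    unfolding pw_def using b by (subst prod.nat_ivl_Suc') (auto simp: mult.commute)
  ultimately show ?thesis by simp
qed

lemma decomp:
  assumes Qc: "\<And>\<tau> c. Q (\<tau>(Suc K := c)) = Q \<tau>"
  shows "(\<Sum>\<tau>\<in>{\<tau>\<in>P a b (Suc K). Q \<tau>}. pw B (Suc K) \<tau>)
       = (\<Sum>h<b. (\<Sum>\<sigma>\<in>{\<sigma>\<in>P a h K. Q \<sigma>}. pw B K \<sigma>) * B h b)"
proof -
  let ?S = "{\<tau>\<in>P a b (Suc K). Q \<tau>}"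
  let ?T = "SIGMA h:{..<b}. {\<sigma>\<in>P a h K. Q \<sigma>}"
  have "(\<Sum>\<tau>\<in>?S. pw B (Suc K) \<tau>) = (\<Sum>(h,\<sigma>)\<in>?T. pw B K \<sigma> * B h b)"
  proof (rule sum.reindex_bij_witness[where j = "\<lambda>\<tau>. (\<tau> K, \<tau>(Suc K := 0))"
        and i = "\<lambda>(h,\<sigma>). \<sigma>(Suc K := b)"])
    fix \<tau> assume "\<tau> \<in> ?S"
    then have h: "\<tau> 0 = a" "\<tau> (Suc K) = b" "\<forall>k<Suc K. \<tau> k < \<tau> (Suc k)" "\<forall>k>Suc K. \<tau> k = 0" "Q \<tau>"
      by (auto simp: P_def)
    show "(case (\<tau> K, \<tau>(Suc K := 0)) of (h, \<sigma>) \<Rightarrow> \<sigma>(Suc K := b)) = \<tau>"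
      using h(2) by auto
    have "Q (\<tau>(Suc K := 0))" using Qc h(5) by simp
    moreover have "\<tau> K < b" using h(2,3) by auto
    moreover have "\<tau>(Suc K := 0) \<in> P a (\<tau> K) K"
      unfolding P_def using h(1,3,4) by (auto simp: Suc_lessI)
    ultimately show "(\<tau> K, \<tau>(Suc K := 0)) \<in> ?T" by auto
    show "(case (\<tau> K, \<tau>(Suc K := 0)) of (h, \<sigma>) \<Rightarrow> pw B K \<sigma> * B h b) = pw B (Suc K) \<tau>"
      using pw_Suc[of \<tau> K b B, OF h(2)] by simp
  next
    fix p assume "p \<in> ?T"
    then obtain h \<sigma> where p: "p = (h, \<sigma>)" and hb: "h < b" and s: "\<sigma> \<in> P a h K" "Q \<sigma>" by auto
    from s have h: "\<sigma> 0 = a" "\<sigma> K = h" "\<forall>k<K. \<sigma> k < \<sigma> (Suc k)" "\<forall>k>K. \<sigma> k = 0"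
      by (auto simp: P_def)
    show "(\<lambda>\<tau>. (\<tau> K, \<tau>(Suc K := 0))) ((\<lambda>(h,\<sigma>). \<sigma>(Suc K := b)) p) = p"
      using p h(2,4) by (auto simp: fun_eq_iff)
    have "Q (\<sigma>(Suc K := b))" using Qc s(2) by simp
    moreover have "\<sigma>(Suc K := b) \<in> P a b (Suc K)"
      unfolding P_def using h hb by (auto simp: less_Suc_eq)
    ultimately show "(\<lambda>(h,\<sigma>). \<sigma>(Suc K := b)) p \<in> ?S" using p by auto
  qed
  also have "\<dots> = (\<Sum>h<b. \<Sum>\<sigma>\<in>{\<sigma>\<in>P a h K. Q \<sigma>}. pw B K \<sigma> * B h b)"
    by (rule sum.Sigma[symmetric]) (auto intro: finite_subset[OF _ finite_P])
  also have "\<dots> = (\<Sum>h<b. (\<Sum>\<sigma>\<in>{\<sigma>\<in>P a h K. Q \<sigma>}. pw B K \<sigma>) * B h b)"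
    by (simp add: sum_distrib_right)
  finally show ?thesis .
qed

definition supp :: "nat \<Rightarrow> (nat \<Rightarrow> nat \<Rightarrow> real) \<Rightarrow> bool" where
  "supp N B \<longleftrightarrow> (\<forall>i j. B i j \<noteq> 0 \<longrightarrow> 1 \<le> i \<and> i < j \<and> j \<le> N)"

lemma sum_support:
  assumes "supp N B"
  shows "(\<Sum>h<b. g h * B h b) = (\<Sum>h\<in>{1..N}. g h * B h b)"
proof -
  have s: "\<And>i. B i b \<noteq> 0 \<Longrightarrow> 1 \<le> i \<and> i < b \<and> b \<le> N" using assms unfolding supp_def by blast
  have "(\<Sum>h<b. g h * B h b) = (\<Sum>h\<in>{1..N} \<inter> {..<b}. g h * B h b)"
    by (rule sum.mono_neutral_right) (auto dest: s)
  also have "\<dots> = (\<Sum>h\<in>{1..N}. g h * B h b)"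
    by (rule sum.mono_neutral_right[symmetric]) (auto dest: s)
  finally show ?thesis .
qed

lemma P0: "P a b 0 = (if a = b then {(\<lambda>k. 0)(0 := a)} else {})"
  by (auto simp: P_def fun_eq_iff)

lemma L1:
  assumes "supp N B"
  shows "(\<Sum>\<tau>\<in>P a b K. pw B K \<tau>) = mpow N B K a b"
proof (induction K arbitrary: b)
  case 0
  then show ?case by (simp add: P0 pw_def)
next
  case (Suc K)
  have "(\<Sum>\<tau>\<in>P a b (Suc K). pw B (Suc K) \<tau>) = (\<Sum>\<tau>\<in>{\<tau>\<in>P a b (Suc K). True}. pw B (Suc K) \<tau>)"
    by simp
  also have "\<dots> = (\<Sum>h<b. (\<Sum>\<sigma>\<in>{\<sigma>\<in>P a h K. True}. pw B K \<sigma>) * B h b)"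
    by (rule decomp) simp
  also have "\<dots> = (\<Sum>h<b. mpow N B K a h * B h b)"
    using Suc.IH by simp
  also have "\<dots> = mpow N B (Suc K) a b"
    using sum_support[OF assms] by simp
  finally show ?case .
qed

lemma L2:
  assumes "supp N B"
  shows "k \<le> K \<Longrightarrow> (\<Sum>\<tau>\<in>{\<tau>\<in>P a b K. \<tau> k = t}. pw B K \<tau>) = mpow N B k a t * mpow N B (K - k) t b"
proof (induction K arbitrary: b)
  case 0
  then have "{\<tau>\<in>P a b 0. \<tau> k = t} = (if t = b then P a b 0 else {})"
    by (auto simp: P_def)
  then show ?case using 0 L1[OF assms, where a=a and b=b and K=0] by simp
next
  case (Suc K)
  show ?case
  proof (cases "k = Suc K")
    case True
    then have "{\<tau>\<in>P a b (Suc K). \<tau> k = t} = (if t = b then P a b (Suc K) else {})"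
      by (auto simp: P_def)
    then show ?thesis using True L1[OF assms, where a=a and b=b and K="Suc K"] by simp
  next
    case False
    then have kK: "k \<le> K" using Suc.prems by simp
    have "(\<Sum>\<tau>\<in>{\<tau>\<in>P a b (Suc K). \<tau> k = t}. pw B (Suc K) \<tau>)
        = (\<Sum>h<b. (\<Sum>\<sigma>\<in>{\<sigma>\<in>P a h K. \<sigma> k = t}. pw B K \<sigma>) * B h b)"
      by (rule decomp) (use False in auto)
    also have "\<dots> = (\<Sum>h<b. mpow N B k a t * (mpow N B (K - k) t h * B h b))"
      using Suc.IH[OF kK] by (simp add: mult.assoc)
    also have "\<dots> = mpow N B k a t * (\<Sum>h<b. mpow N B (K - k) t h * B h b)"
      by (simp add: sum_distrib_left)
    also have "\<dots> = mpow N B k a t * mpow N B (Suc K - k) t b"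
      using sum_support[OF assms] kK by (simp add: Suc_diff_le)
    finally show ?thesis .
  qed
qed

definition U :: "nat \<Rightarrow> nat \<Rightarrow> nat \<Rightarrow> real" where
  "U N i j = (if 1 \<le> i \<and> i < j \<and> j \<le> N then 1 else 0)"

lemma supp_U: "supp N (U N)"
  by (simp add: supp_def U_def)

lemma sum_choose_lt: "(\<Sum>m<x. (m choose k)) = x choose Suc k"
  by (induction x) auto

lemma mpowU:
  "1 \<le> i \<Longrightarrow> j \<le> N \<Longrightarrow> mpow N (U N) (Suc k) i j = (if i < j then real ((j - i - 1) choose k) else 0)"
proof (induction k arbitrary: j)
  case 0
  have "mpow N (U N) (Suc 0) i j = (\<Sum>h\<in>{1..N}. (if i = h then 1 else 0) * U N h j)" by simp
  also have "\<dots> = (\<Sum>h\<in>{1..N}. (if i = h then U N h j else 0))"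
    by (rule sum.cong) auto
  also have "\<dots> = (if i \<in> {1..N} then U N i j else 0)"
    by (simp add: sum.delta)
  finally show ?case using 0 by (auto simp: U_def)
next
  case (Suc k)
  have "mpow N (U N) (Suc (Suc k)) i j = (\<Sum>h\<in>{1..N}. mpow N (U N) (Suc k) i h * U N h j)" by simp
  also have "\<dots> = (\<Sum>h\<in>{1..N}. (if i < h then real ((h - i - 1) choose k) else 0) * U N h j)"
    using Suc.IH Suc.prems by (intro sum.cong) auto
  also have "\<dots> = (\<Sum>h\<in>{Suc i..<j}. real ((h - i - 1) choose k))"
    by (rule sum.mono_neutral_cong_right) (use Suc.prems in \<open>auto simp: U_def\<close>)
  also have "\<dots> = real (\<Sum>h\<in>{Suc i..<j}. (h - i - 1) choose k)"
    by simp
  also have "(\<Sum>h\<in>{Suc i..<j}. (h - i - 1) choose k) = (if i < j then (j - i - 1) choose Suc k else 0)"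
  proof (cases "i < j")
    case True
    have "{Suc i..<j} = {0 + Suc i..<(j - Suc i) + Suc i}" using True by simp
    then have "(\<Sum>h\<in>{Suc i..<j}. (h - i - 1) choose k) = (\<Sum>m\<in>{0..<j - Suc i}. (m + Suc i - i - 1) choose k)"
      by (simp only: sum.shift_bounds_nat_ivl)
    also have "\<dots> = (\<Sum>m<j - Suc i. m choose k)"
      by (simp add: atLeast0LessThan)
    also have "\<dots> = (j - i - 1) choose Suc k"
      by (simp add: sum_choose_lt)
    finally show ?thesis using True by simp
  next
    case False
    then show ?thesis by simp
  qed
  finally show ?case by simp
qed

lemma pwU:
  assumes "\<tau> \<in> P 1 (n+1) K"
  shows "pw (U (n+1)) K \<tau> = 1"
proof -
  from assms have h: "\<tau> 0 = 1" "\<tau> K = n+1" "\<forall>k<K. \<tau> k < \<tau> (Suc k)"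
    by (auto simp: P_def)
  have "U (n+1) (\<tau> (j - 1)) (\<tau> j) = 1" if j: "j \<in> {1..K}" for j
  proof -
    have "j - 1 < K" using j by auto
    then have "\<tau> (j - 1) < \<tau> (Suc (j - 1))" using h(3) by blast
    moreover have "Suc (j - 1) = j" using j by auto
    moreover have "\<tau> 0 \<le> \<tau> (j - 1)" using mono_path[OF h(3), of 0 "j - 1"] j by auto
    moreover have "\<tau> j \<le> \<tau> K" using mono_path[OF h(3), of j K] j by auto
    ultimately show ?thesis using h(1,2) by (auto simp: U_def)
  qed
  then show ?thesis unfolding pw_def by simp
qed

lemma sum_all:
  assumes "\<forall>l\<in>{1..I}. supp (n+1) (B l)"
  shows "(\<Sum>m\<in>multipart I n K. \<Prod>l\<in>{1..I}. pw (B l) (K l) (m l)) = (\<Prod>l\<in>{1..I}. mpow (n+1) (B l) (K l) 1 (n+1))"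
proof -
  have "(\<Prod>l\<in>{1..I}. mpow (n+1) (B l) (K l) 1 (n+1)) = (\<Prod>l\<in>{1..I}. \<Sum>\<tau>\<in>partitions n (K l). pw (B l) (K l) \<tau>)"
  proof (rule prod.cong[OF refl])
    fix l assume "l \<in> {1..I}"
    then show "mpow (n+1) (B l) (K l) 1 (n+1) = (\<Sum>\<tau>\<in>partitions n (K l). pw (B l) (K l) \<tau>)"
      using L1[of "n+1" "B l"] assms by (simp add: partitions_P)
  qed
  also have "\<dots> = (\<Sum>m\<in>multipart I n K. \<Prod>l\<in>{1..I}. pw (B l) (K l) (m l))"
    unfolding multipart_def by (rule prod_sum_PiE) (auto simp: partitions_P finite_P)
  finally show ?thesis by simp
qed

lemma S0_eq:
  assumes "1 \<le> I" "\<forall>l\<in>{1..I}. 1 \<le> k l \<and> k l \<le> K l - 1 \<and> K l \<le> n"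
  shows "multipart I n K \<inter> E0set I k = (\<Union>t\<in>{2..n}. PiE {1..I} (\<lambda>l. {\<tau>\<in>partitions n (K l). \<tau> (k l) = t}))"
proof
  show "multipart I n K \<inter> E0set I k \<subseteq> (\<Union>t\<in>{2..n}. PiE {1..I} (\<lambda>l. {\<tau>\<in>partitions n (K l). \<tau> (k l) = t}))"
  proof
    fix m assume m: "m \<in> multipart I n K \<inter> E0set I k"
    let ?t = "m 1 (k 1)"
    have one: "1 \<in> {1..I}" using assms(1) by simp
    have mP: "m \<in> PiE {1..I} (\<lambda>l. partitions n (K l))" using m by (simp add: multipart_def)
    have m1: "m 1 \<in> P 1 (n+1) (K 1)" using PiE_mem[OF mP one] by (simp add: partitions_P)
    then have h: "m 1 0 = 1" "m 1 (K 1) = n+1" "\<forall>j<K 1. m 1 j < m 1 (Suc j)"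
      unfolding P_def by blast+
    have "1 \<le> k 1 \<and> k 1 \<le> K 1 - 1 \<and> K 1 \<le> n" using assms(2) one by blast
    then have kk: "1 \<le> k 1" "k 1 < K 1" by auto
    have a: "m 1 0 < m 1 (k 1)" by (rule strict_mono_path[OF h(3)]) (use kk in auto)
    have b: "m 1 (k 1) < m 1 (K 1)" by (rule strict_mono_path[OF h(3)]) (use kk in auto)
    have t: "?t \<in> {2..n}" unfolding atLeastAtMost_iff using a b h(1,2) by linarith
    have mE: "\<forall>l\<in>{1..I}. \<forall>l'\<in>{1..I}. m l (k l) = m l' (k l')" using m unfolding E0set_def by blast
    have "m \<in> PiE {1..I} (\<lambda>l. {\<tau>\<in>partitions n (K l). \<tau> (k l) = ?t})"
      unfolding PiE_iff
    proof (intro conjI ballI)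
      fix l assume l: "l \<in> {1..I}"
      have "m l \<in> partitions n (K l)" using PiE_mem[OF mP l] .
      moreover have "m l (k l) = ?t" using mE l one by blast
      ultimately show "m l \<in> {\<tau>\<in>partitions n (K l). \<tau> (k l) = ?t}" by simp
    next
      show "m \<in> extensional {1..I}" using mP by (simp add: PiE_iff)
    qed
    then show "m \<in> (\<Union>t\<in>{2..n}. PiE {1..I} (\<lambda>l. {\<tau>\<in>partitions n (K l). \<tau> (k l) = t}))"
      by (rule UN_I[OF t])
  qed
next
  show "(\<Union>t\<in>{2..n}. PiE {1..I} (\<lambda>l. {\<tau>\<in>partitions n (K l). \<tau> (k l) = t})) \<subseteq> multipart I n K \<inter> E0set I k"
  proof
    fix m assume "m \<in> (\<Union>t\<in>{2..n}. PiE {1..I} (\<lambda>l. {\<tau>\<in>partitions n (K l). \<tau> (k l) = t}))"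
    then obtain t where t: "m \<in> PiE {1..I} (\<lambda>l. {\<tau>\<in>partitions n (K l). \<tau> (k l) = t})" by blast
    have "PiE {1..I} (\<lambda>l. {\<tau>\<in>partitions n (K l). \<tau> (k l) = t}) \<subseteq> PiE {1..I} (\<lambda>l. partitions n (K l))"
      by (rule PiE_mono) blast
    with t have "m \<in> multipart I n K" unfolding multipart_def by blast
    moreover have "m \<in> E0set I k"
      unfolding E0set_def using PiE_mem[OF t] by simp
    ultimately show "m \<in> multipart I n K \<inter> E0set I k" by blast
  qed
qed

lemma sum_S0:
  assumes "1 \<le> I" "\<forall>l\<in>{1..I}. 1 \<le> k l \<and> k l \<le> K l - 1 \<and> K l \<le> n"
    and "\<forall>l\<in>{1..I}. supp (n+1) (B l)"
  shows "(\<Sum>m\<in>multipart I n K \<inter> E0set I k. \<Prod>l\<in>{1..I}. pw (B l) (K l) (m l))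
       = (\<Sum>t\<in>{2..n}. \<Prod>l\<in>{1..I}. mpow (n+1) (B l) (k l) 1 t * mpow (n+1) (B l) (K l - k l) t (n+1))"
proof -
  let ?A = "\<lambda>t. PiE {1..I} (\<lambda>l. {\<tau>\<in>partitions n (K l). \<tau> (k l) = t})"
  have fin: "finite (?A t)" for t
    by (rule finite_PiE) (auto intro: finite_subset[OF _ finite_P] simp: partitions_P)
  have one: "1 \<in> {1..I}" using assms(1) by simp
  have disj: "\<forall>t\<in>{2..n}. \<forall>t'\<in>{2..n}. t \<noteq> t' \<longrightarrow> ?A t \<inter> ?A t' = {}"
  proof (intro ballI impI)
    fix t t' :: nat assume tt: "t \<noteq> t'"
    show "?A t \<inter> ?A t' = {}"
    proof (rule ccontr)
      assume "?A t \<inter> ?A t' \<noteq> {}"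
      then obtain m where m: "m \<in> ?A t" "m \<in> ?A t'" by blast
      have "m 1 (k 1) = t" using PiE_mem[OF m(1) one] by simp
      moreover have "m 1 (k 1) = t'" using PiE_mem[OF m(2) one] by simp
      ultimately show False using tt by simp
    qed
  qed
  have "(\<Sum>m\<in>multipart I n K \<inter> E0set I k. \<Prod>l\<in>{1..I}. pw (B l) (K l) (m l))
      = (\<Sum>t\<in>{2..n}. \<Sum>m\<in>?A t. \<Prod>l\<in>{1..I}. pw (B l) (K l) (m l))"
    unfolding S0_eq[OF assms(1,2)] by (rule sum.UNION_disjoint) (use fin disj in auto)
  also have "\<dots> = (\<Sum>t\<in>{2..n}. \<Prod>l\<in>{1..I}. \<Sum>\<tau>\<in>{\<tau>\<in>partitions n (K l). \<tau> (k l) = t}. pw (B l) (K l) \<tau>)"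
    by (rule sum.cong[OF refl], rule prod_sum_PiE[symmetric])
       (auto intro: finite_subset[OF _ finite_P] simp: partitions_P)
  also have "\<dots> = (\<Sum>t\<in>{2..n}. \<Prod>l\<in>{1..I}. mpow (n+1) (B l) (k l) 1 t * mpow (n+1) (B l) (K l - k l) t (n+1))"
  proof (rule sum.cong[OF refl], rule prod.cong[OF refl])
    fix t l assume l: "l \<in> {1..I}"
    then have "1 \<le> k l \<and> k l \<le> K l - 1 \<and> K l \<le> n" using assms(2) by blast
    then have "k l \<le> K l" by auto
    then show "(\<Sum>\<tau>\<in>{\<tau>\<in>partitions n (K l). \<tau> (k l) = t}. pw (B l) (K l) \<tau>)
        = mpow (n+1) (B l) (k l) 1 t * mpow (n+1) (B l) (K l - k l) t (n+1)"
      using L2[of "n+1" "B l" "k l" "K l" 1 "n+1" t] assms(3) l by (simp add: partitions_P)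
  qed
  finally show ?thesis .
qed

lemma sum_subset_one:
  assumes "S \<subseteq> multipart I n K"
  shows "real (card S) = (\<Sum>m\<in>S. \<Prod>l\<in>{1..I}. pw (U (n+1)) (K l) (m l))"
proof -
  have "(\<Sum>m\<in>S. \<Prod>l\<in>{1..I}. pw (U (n+1)) (K l) (m l)) = (\<Sum>m\<in>S. 1)"
  proof (rule sum.cong[OF refl])
    fix m assume "m \<in> S"
    then have mP: "m \<in> PiE {1..I} (\<lambda>l. partitions n (K l))" using assms by (auto simp: multipart_def)
    show "(\<Prod>l\<in>{1..I}. pw (U (n+1)) (K l) (m l)) = 1"
    proof (rule prod.neutral, rule ballI)
      fix l assume l: "l \<in> {1..I}"
      have "m l \<in> P 1 (n+1) (K l)" using PiE_mem[OF mP l] by (simp add: partitions_P)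
      then show "pw (U (n+1)) (K l) (m l) = 1" by (rule pwU)
    qed
  qed
  then show ?thesis by simp
qed

lemma finite_multipart: "finite (multipart I n K)"
  unfolding multipart_def by (rule finite_PiE) (auto simp: partitions_P finite_P)

theorem mainTheorem4:
  fixes I n :: nat and K k :: "nat \<Rightarrow> nat" and p0 :: real
    and M :: "'a measure" and f :: "nat \<Rightarrow> nat \<Rightarrow> 'a \<Rightarrow> real"
  assumes "1 \<le> I"
    and "\<forall>l\<in>{1..I}. 1 \<le> k l \<and> k l \<le> K l - 1 \<and> K l \<le> n"
    and "prob_space M"
    and "0 < p0" and "p0 < 1"
    and "0 < q0 I n K k" and "q0 I n K k < 1"
    and "QY I n K M f > QYE0 I n K k M f"
  shows "PY_E0 p0 I n K k M f / PY_E1 p0 I n K k M f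
       = (1 - q0 I n K k) / q0 I n K k * (QYE0 I n K k M f / (QY I n K M f - QYE0 I n K k M f))"
proof -
  define All where "All = multipart I n K"
  define S0 where "S0 = multipart I n K \<inter> E0set I k"
  define S1 where "S1 = multipart I n K - E0set I k"
  define lik where "lik = lik_m n M f I K"
  define c0 where "c0 = real (card S0)"
  define c1 where "c1 = real (card S1)"
  define L0 where "L0 = (\<Sum>m\<in>S0. lik m)"
  define L1 where "L1 = (\<Sum>m\<in>S1. lik m)"
  have finAll: "finite All" unfolding All_def by (rule finite_multipart)
  have S0sub: "S0 \<subseteq> All" and S1sub: "S1 \<subseteq> All" unfolding S0_def S1_def All_def by auto
  have finS0: "finite S0" using finAll S0sub by (rule finite_subset[rotated])
  have finS1: "finite S1" using finAll S1sub by (rule finite_subset[rotated])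
  have AllU: "All = S0 \<union> S1" and disj01: "S0 \<inter> S1 = {}" unfolding All_def S0_def S1_def by auto
  have likE: "lik m = (\<Prod>l\<in>{1..I}. pw (Amat n M (f l)) (K l) (m l))" for m
    unfolding lik_def lik_m_def pw_def by simp
  have suppA: "\<forall>l\<in>{1..I}. supp (n+1) (Amat n M (f l))"
    by (auto simp: supp_def Amat_def)
  have suppU: "\<forall>l\<in>{1..I}. supp (n+1) ((\<lambda>l. U (n+1)) l)"
    by (simp add: supp_U)
  have kl: "1 \<le> k l \<and> k l < K l \<and> K l \<le> n" if "l \<in> {1..I}" for l
  proof -
    have "1 \<le> k l \<and> k l \<le> K l - 1 \<and> K l \<le> n" using assms(2) that by blast
    then show ?thesis by auto
  qed
  have QY_eq: "QY I n K M f = L0 + L1"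
  proof -
    have "QY I n K M f = (\<Sum>m\<in>All. lik m)"
      unfolding QY_def All_def likE using sum_all[OF suppA] by simp
    also have "\<dots> = L0 + L1" unfolding L0_def L1_def AllU
      by (rule sum.union_disjoint) (use finS0 finS1 disj01 in auto)
    finally show ?thesis .
  qed
  have QYE0_eq: "QYE0 I n K k M f = L0"
    unfolding QYE0_def L0_def S0_def likE using sum_S0[OF assms(1,2) suppA] by simp
  have cAll: "c0 + c1 = (\<Prod>l\<in>{1..I}. real ((n - 1) choose (K l - 1)))"
  proof -
    have "c0 + c1 = real (card All)"
      unfolding c0_def c1_def AllU using card_Un_disjoint[OF finS0 finS1 disj01] by simp
    also have "\<dots> = (\<Prod>l\<in>{1..I}. mpow (n+1) (U (n+1)) (K l) 1 (n+1))"
      using sum_subset_one[of All I n K] sum_all[OF suppU, of K] unfolding All_def by simp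
    also have "\<dots> = (\<Prod>l\<in>{1..I}. real ((n - 1) choose (K l - 1)))"
    proof (rule prod.cong[OF refl])
      fix l assume l: "l \<in> {1..I}"
      have "K l = Suc (K l - 1)" using kl[OF l] by simp
      then have "mpow (n+1) (U (n+1)) (K l) 1 (n+1) = mpow (n+1) (U (n+1)) (Suc (K l - 1)) 1 (n+1)" by simp
      also have "\<dots> = real ((n + 1 - 1 - 1) choose (K l - 1))"
        using kl[OF l] by (subst mpowU) auto
      finally show "mpow (n+1) (U (n+1)) (K l) 1 (n+1) = real ((n - 1) choose (K l - 1))" by simp
    qed
    finally show ?thesis .
  qed
  have cS0: "c0 = (\<Sum>t\<in>{2..n}. \<Prod>l\<in>{1..I}.
      real ((t - 2) choose (k l - 1)) * real ((n - t) choose (K l - k l - 1)))"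
  proof -
    have "c0 = (\<Sum>t\<in>{2..n}. \<Prod>l\<in>{1..I}. mpow (n+1) (U (n+1)) (k l) 1 t * mpow (n+1) (U (n+1)) (K l - k l) t (n+1))"
      using sum_subset_one[of S0 I n K] sum_S0[OF assms(1,2) suppU] S0sub
      unfolding c0_def S0_def All_def by simp
    also have "\<dots> = (\<Sum>t\<in>{2..n}. \<Prod>l\<in>{1..I}.
      real ((t - 2) choose (k l - 1)) * real ((n - t) choose (K l - k l - 1)))"
    proof (rule sum.cong[OF refl], rule prod.cong[OF refl])
      fix t l assume t: "t \<in> {2..n}" and l: "l \<in> {1..I}"
      have e1: "k l = Suc (k l - 1)" using kl[OF l] by simp
      have e2: "K l - k l = Suc (K l - k l - 1)" using kl[OF l] by arith
      have "mpow (n+1) (U (n+1)) (k l) 1 t = mpow (n+1) (U (n+1)) (Suc (k l - 1)) 1 t"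
        using e1 by simp
      also have "\<dots> = real ((t - 1 - 1) choose (k l - 1))"
        using t by (subst mpowU) auto
      finally have m1: "mpow (n+1) (U (n+1)) (k l) 1 t = real ((t - 2) choose (k l - 1))"
        by (simp add: numeral_2_eq_2)
      have "mpow (n+1) (U (n+1)) (K l - k l) t (n+1) = mpow (n+1) (U (n+1)) (Suc (K l - k l - 1)) t (n+1)"
        using e2 by simp
      also have "\<dots> = real ((n + 1 - t - 1) choose (K l - k l - 1))"
        using t by (subst mpowU) auto
      finally have m2: "mpow (n+1) (U (n+1)) (K l - k l) t (n+1) = real ((n - t) choose (K l - k l - 1))"
        by simp
      show "mpow (n+1) (U (n+1)) (k l) 1 t * mpow (n+1) (U (n+1)) (K l - k l) t (n+1)
          = real ((t - 2) choose (k l - 1)) * real ((n - t) choose (K l - k l - 1))"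
        using m1 m2 by simp
    qed
    finally show ?thesis .
  qed
  have q0_eq: "q0 I n K k = c0 / (c0 + c1)"
  proof -
    have "q0 I n K k = (\<Sum>t\<in>{2..n}. (\<Prod>l\<in>{1..I}.
      real ((t - 2) choose (k l - 1)) * real ((n - t) choose (K l - k l - 1)))
      / (\<Prod>l\<in>{1..I}. real ((n - 1) choose (K l - 1))))"
      unfolding q0_def by (simp add: prod_dividef)
    also have "\<dots> = (\<Sum>t\<in>{2..n}. \<Prod>l\<in>{1..I}.
      real ((t - 2) choose (k l - 1)) * real ((n - t) choose (K l - k l - 1)))
      / (\<Prod>l\<in>{1..I}. real ((n - 1) choose (K l - 1)))"
      by (simp add: sum_divide_distrib)
    also have "\<dots> = c0 / (c0 + c1)"
      by (subst cAll, subst cS0, rule refl)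
    finally show ?thesis .
  qed
  have c0pos: "c0 > 0"
  proof (rule ccontr)
    assume "\<not> c0 > 0"
    then have "c0 = 0" unfolding c0_def by simp
    then have "q0 I n K k = 0" using q0_eq by simp
    then show False using assms(6) by simp
  qed
  have c1pos: "c1 > 0"
  proof (rule ccontr)
    assume "\<not> c1 > 0"
    then have "c1 = 0" unfolding c1_def by simp
    then have "q0 I n K k = 1" using q0_eq c0pos by simp
    then show False using assms(7) by simp
  qed
  have L1pos: "L1 > 0" using assms(8) QY_eq QYE0_eq by simp
  have PE0: "PY_E0 p0 I n K k M f = L0 / c0"
  proof -
    have pr: "prior_m p0 I n K k m = p0 / c0" if "m \<in> S0" for m
      using that unfolding prior_m_def c0_def S0_def by simp
    have "(\<Sum>m\<in>S0. prior_m p0 I n K k m * lik m) = p0 / c0 * L0"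
      unfolding L0_def sum_distrib_left by (rule sum.cong) (simp_all add: pr)
    moreover have "(\<Sum>m\<in>S0. prior_m p0 I n K k m) = c0 * (p0 / c0)"
      using pr unfolding c0_def by simp
    ultimately show ?thesis
      unfolding PY_E0_def Let_def S0_def[symmetric] lik_def[symmetric]
      using c0pos assms(4) by (simp add: field_simps)
  qed
  have PE1: "PY_E1 p0 I n K k M f = L1 / c1"
  proof -
    have pr: "prior_m p0 I n K k m = (1 - p0) / c1" if "m \<in> S1" for m
      using that unfolding prior_m_def c1_def S1_def by simp
    have A: "(\<Sum>m\<in>S1. prior_m p0 I n K k m * lik m) = (1 - p0) / c1 * L1"
      unfolding L1_def sum_distrib_left by (rule sum.cong) (simp_all add: pr)
    have B: "(\<Sum>m\<in>S1. prior_m p0 I n K k m) = c1 * ((1 - p0) / c1)"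
      using pr unfolding c1_def by simp
    have "PY_E1 p0 I n K k M f = ((1 - p0) / c1 * L1) / (c1 * ((1 - p0) / c1))"
      unfolding PY_E1_def Let_def S1_def[symmetric] lik_def[symmetric] A B ..
    also have "\<dots> = L1 / c1"
      using c1pos assms(5) by (simp add: field_simps)
    finally show ?thesis .
  qed
  have s0: "c0 + c1 > 0" using c0pos c1pos by simp
  have e1: "(1 - c0 / (c0 + c1)) / (c0 / (c0 + c1)) = c1 / c0"
  proof -
    have a: "1 - c0 / (c0 + c1) = c1 / (c0 + c1)" using s0 by (simp add: field_simps)
    have "(c1 / (c0 + c1)) / (c0 / (c0 + c1)) = c1 / c0" using s0 c0pos by (simp add: divide_divide_eq_right)
    with a show ?thesis by simp
  qed
  have e2: "L0 + L1 - L0 = L1" by simp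
  show ?thesis
    unfolding PE0 PE1 q0_eq QY_eq QYE0_eq e1 e2
    using c0pos c1pos L1pos by (simp add: field_simps)
qed

end
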